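(* Let $U\subseteq\mathbb C^p$ be a connected open subset and $f:U\to Z$ a holomorphic map. If $F_1,F_2:U\to V$ are holomorphic lifts of $f$ (i.e. holomorphic maps with $\pi\circ F_1=\pi\circ F_2=f$), then there exists $g\in G$ with $F_2=g\circ F_1$ on $U$. The same holds for local lifts of holomorphic germs: if $F_1,F_2:(\mathbb C^p,x)\to V$ are holomorphic germs with $\pi\circ F_1=\pi\circ F_2=f$ as germs at $x$, then $F_2=g\circ F_1$ as germs for some $g\in G$.
   Context: $V$ is a finite-dimensional complex vector space, $G\subset GL(V)$ a finite group, $Z=V/G$ the orbit space realized as $\sigma(V)\subseteq\mathbb C^m$ via a minimal system of homogeneous generators $\sigma=(\sigma_1,\dots,\sigma_m)$ of $\mathbb C[V]^G$, with quotient map $\pi=\sigma:V\to Z$. A holomorphic map into $Z$ means a holomorphic map into $\mathbb C^m$ with values in $Z$. *)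

theory Defs
  imports "HOL-Analysis.Analysis"
begin

text \<open>V is modelled as complex^'n; GL(V) as invertible n x n complex matrices.\<close>

definition finite_linear_group :: "(complex^'n^'n) set \<Rightarrow> bool" where
  "finite_linear_group G \<longleftrightarrow> finite G \<and> mat 1 \<in> G \<and>
     (\<forall>g\<in>G. invertible g \<and> matrix_inv g \<in> G) \<and>
     (\<forall>g\<in>G. \<forall>h\<in>G. g ** h \<in> G)"

inductive alg_gen :: "('x \<Rightarrow> complex) set \<Rightarrow> ('x \<Rightarrow> complex) \<Rightarrow> bool"
  for S where
  const: "alg_gen S (\<lambda>_. c)"
| gen: "s \<in> S \<Longrightarrow> alg_gen S s"
| add: "alg_gen S p \<Longrightarrow> alg_gen S q \<Longrightarrow> alg_gen S (\<lambda>x. p x + q x)"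
| mult: "alg_gen S p \<Longrightarrow> alg_gen S q \<Longrightarrow> alg_gen S (\<lambda>x. p x * q x)"

definition polyfun :: "(complex^'n \<Rightarrow> complex) \<Rightarrow> bool" where
  "polyfun p \<longleftrightarrow> alg_gen (range (\<lambda>i x. x $ i)) p"

definition invariant_poly :: "(complex^'n^'n) set \<Rightarrow> (complex^'n \<Rightarrow> complex) \<Rightarrow> bool" where
  "invariant_poly G p \<longleftrightarrow> polyfun p \<and> (\<forall>g\<in>G. \<forall>x. p (g *v x) = p x)"

definition homogeneous_fun :: "(complex^'n \<Rightarrow> complex) \<Rightarrow> bool" where
  "homogeneous_fun p \<longleftrightarrow> (\<exists>d::nat. \<forall>t x. p (t *s x) = t ^ d * p x)"

definition minimal_homog_generators ::
    "(complex^'n^'n) set \<Rightarrow> (complex^'n \<Rightarrow> complex^'m) \<Rightarrow> bool" where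
  "minimal_homog_generators G \<sigma> \<longleftrightarrow>
     (\<forall>j. invariant_poly G (\<lambda>x. \<sigma> x $ j) \<and> homogeneous_fun (\<lambda>x. \<sigma> x $ j)) \<and>
     (\<forall>p. invariant_poly G p \<longrightarrow> alg_gen (range (\<lambda>j x. \<sigma> x $ j)) p) \<and>
     (\<forall>j. \<not> (\<forall>p. invariant_poly G p \<longrightarrow>
                   alg_gen ((\<lambda>k x. \<sigma> x $ k) ` (UNIV - {j})) p))"

text \<open>Holomorphic maps between complex coordinate spaces: complex-differentiable
  at every point (real Frechet derivative that is complex linear).\<close>
definition holo_on :: "(complex^'p) set \<Rightarrow> (complex^'p \<Rightarrow> complex^'k) \<Rightarrow> bool" where
  "holo_on U F \<longleftrightarrow> (\<forall>x\<in>U. \<exists>L. (F has_derivative L) (at x) \<and>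
       (\<forall>(c::complex) v. L (c *s v) = c *s L v))"

end

theory Submission imports Defs "HOL-Complex_Analysis.Conformal_Mappings" begin

definition lholo :: "(complex^'p) set \<Rightarrow> (complex^'p \<Rightarrow> complex) \<Rightarrow> bool" where
  "lholo U h \<longleftrightarrow> (\<forall>s v t. s + t *s v \<in> U \<longrightarrow> (\<lambda>t. h (s + t *s v)) field_differentiable (at t))"

lemma linear_smul_line: "bounded_linear (\<lambda>u::complex. u *s (v::complex^'p))"
proof -
  have "linear (\<lambda>u::complex. u *s v)"
    by (rule linearI) (simp_all add: vec_eq_iff distrib_right)
  then show ?thesis using linear_conv_bounded_linear by blast
qed

lemma line_deriv: "((\<lambda>t::complex. s + t *s (v::complex^'p)) has_derivative (\<lambda>u. u *s v)) (at t)"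
proof -
  have "((\<lambda>t::complex. t *s v) has_derivative (\<lambda>u. u *s v)) (at t)"
    using bounded_linear_imp_has_derivative[OF linear_smul_line] by blast
  then show ?thesis by (intro derivative_eq_intros) auto
qed

lemma holo_lholo:
  assumes "holo_on U F" "open U"
  shows "lholo U (\<lambda>y. F y $ i)"
  unfolding lholo_def
proof (intro allI impI)
  fix s v t assume st: "s + t *s v \<in> U"
  then obtain L where L: "(F has_derivative L) (at (s + t *s v))" and lin: "\<forall>(c::complex) w. L (c *s w) = c *s L w"
    using assms unfolding holo_on_def by blast
  have "((\<lambda>t. F (s + t *s v)) has_derivative (\<lambda>u. L (u *s v))) (at t)"
    using has_derivative_compose[OF line_deriv L] by (simp add: o_def)
  then have "((\<lambda>t. F (s + t *s v) $ i) has_derivative (\<lambda>u. L (u *s v) $ i)) (at t)"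
    using bounded_linear.has_derivative[OF bounded_linear_vec_nth] by blast
  then have "((\<lambda>t. F (s + t *s v) $ i) has_derivative (\<lambda>u. (L v $ i) * u)) (at t)"
    using lin by (simp add: mult.commute)
  then show "(\<lambda>t. F (s + t *s v) $ i) field_differentiable (at t)"
    unfolding field_differentiable_def has_field_derivative_def by blast
qed

lemma lholo_ball_zero:
  assumes "lholo U h" "ball z r \<subseteq> U" "s \<in> ball z r" "e > 0" "\<forall>w\<in>ball s e. h w = 0" "w \<in> ball z r"
  shows "h w = 0"
proof -
  define v where "v = w - s"
  define l where "l = (\<lambda>t::complex. s + t *s v)"
  define D where "D = l -` ball z r"
  have contl: "\<And>t. continuous (at t) l"
    unfolding l_def by (rule has_derivative_continuous[OF line_deriv])
  have oD: "open D" unfolding D_def by (rule continuous_open_vimage[OF open_ball contl])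
  have cD: "convex D"
  proof (rule convexI)
    fix x y :: complex and a b :: real
    assume x: "x \<in> D" and y: "y \<in> D" and ab: "0 \<le> a" "0 \<le> b" "a + b = 1"
    have a: "a = 1 - b" using ab by simp
    have comp: "\<And>i. s $ i + ((1 - b) *\<^sub>R x + b *\<^sub>R y) * v $ i = (1 - b) *\<^sub>R (s $ i + x * v $ i) + b *\<^sub>R (s $ i + y * v $ i)"
      by (simp add: scaleR_conv_of_real ring_distribs of_real_diff)
    have eq: "l (a *\<^sub>R x + b *\<^sub>R y) = a *\<^sub>R l x + b *\<^sub>R l y"
      unfolding a l_def vec_eq_iff vector_add_component vector_scaleR_component vector_smult_component
      by (intro allI comp)
    have "l x \<in> ball z r" "l y \<in> ball z r" using x y unfolding D_def by auto
    then have "a *\<^sub>R l x + b *\<^sub>R l y \<in> ball z r"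
      using convexD[OF convex_ball ] ab by blast
    then show "a *\<^sub>R x + b *\<^sub>R y \<in> D" unfolding D_def using eq by simp
  qed
  have l0: "l 0 = s" and l1: "l 1 = w" unfolding l_def v_def by (simp_all add: vec_eq_iff)
  have hol: "(\<lambda>t. h (l t)) holomorphic_on D"
    unfolding holomorphic_on_def
  proof
    fix t assume "t \<in> D"
    then have "s + t *s v \<in> U" using assms(2) unfolding D_def l_def by auto
    then have "(\<lambda>t. h (s + t *s v)) field_differentiable (at t)" using assms(1) unfolding lholo_def by blast
    then show "(\<lambda>t. h (l t)) field_differentiable (at t within D)"
      unfolding l_def using field_differentiable_at_within by blast
  qed
  define D0 where "D0 = D \<inter> l -` ball s e"
  have oD0: "open D0" unfolding D0_def by (intro open_Int oD continuous_open_vimage[OF open_ball contl])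
  have "0 \<in> D0" unfolding D0_def D_def using l0 assms(3,4) by auto
  have "h (l 1) = 0"
  proof (rule analytic_continuation_open[of D0 D "\<lambda>t. h (l t)" "\<lambda>_. 0" 1])
    show "D0 \<noteq> {}" using \<open>0 \<in> D0\<close> by blast
    show "connected D" using cD convex_connected by blast
    show "D0 \<subseteq> D" unfolding D0_def by blast
    show "(\<lambda>_. 0) holomorphic_on D" by simp
    show "\<And>t. t \<in> D0 \<Longrightarrow> h (l t) = 0" unfolding D0_def using assms(5) by auto
    show "1 \<in> D" unfolding D_def using l1 assms(6) by simp
    show "open D0" by (rule oD0)
    show "open D" by (rule oD)
    show "(\<lambda>t. h (l t)) holomorphic_on D" by (rule hol)
  qed
  then show ?thesis using l1 by simp
qed

lemma lholo_identity:
  assumes "open U" "connected U" "lholo U h" "W \<subseteq> U" "open W" "W \<noteq> {}"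
    "\<forall>y\<in>W. h y = 0" "y \<in> U"
  shows "h y = 0"
proof -
  define S where "S = {z\<in>U. \<exists>e>0. ball z e \<subseteq> U \<and> (\<forall>w\<in>ball z e. h w = 0)}"
  define T where "T = U - S"
  have oS: "open S"
    unfolding open_contains_ball
  proof
    fix z assume "z \<in> S"
    then obtain e where e: "e > 0" "ball z e \<subseteq> U" "\<forall>w\<in>ball z e. h w = 0" unfolding S_def by blast
    have "ball z e \<subseteq> S"
    proof
      fix w assume w: "w \<in> ball z e"
      have "ball w (e - dist z w) \<subseteq> ball z e"
        by (simp add: ball_subset_ball_iff dist_commute)
      moreover have "e - dist z w > 0" using w by simp
      ultimately show "w \<in> S" unfolding S_def using e w by blast
    qed
    then show "\<exists>e>0. ball z e \<subseteq> S" using e by blast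
  qed
  have oT: "open T"
    unfolding open_contains_ball
  proof
    fix z assume z: "z \<in> T"
    then obtain r where r: "r > 0" "ball z r \<subseteq> U" using assms(1) unfolding T_def open_contains_ball by blast
    have "ball z r \<subseteq> T"
    proof
      fix w assume w: "w \<in> ball z r"
      show "w \<in> T"
      proof (rule ccontr)
        assume "w \<notin> T"
        then have "w \<in> S" using w r unfolding T_def by blast
        then obtain e where e: "e > 0" "\<forall>u\<in>ball w e. h u = 0" unfolding S_def by blast
        have "\<forall>u\<in>ball z r. h u = 0"
          using lholo_ball_zero[OF assms(3) r(2) w e(1) e(2)] by blast
        then have "z \<in> S" unfolding S_def using r z T_def by blast
        then show False using z unfolding T_def by blast
      qed
    qed
    then show "\<exists>e>0. ball z e \<subseteq> T" using r by blast
  qed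
  obtain y0 where "y0 \<in> W" using assms(6) by blast
  then obtain e where e: "e > 0" "ball y0 e \<subseteq> W" using assms(5) open_contains_ball by blast
  then have "y0 \<in> S" unfolding S_def using assms(4,7) \<open>y0 \<in> W\<close> by blast
  have "S \<inter> U = {} \<or> T \<inter> U = {}"
    by (rule connectedD[OF assms(2) oS oT]) (auto simp: T_def)
  then have "T \<inter> U = {}" using \<open>y0 \<in> S\<close> unfolding S_def by blast
  then have "y \<in> S" using assms(8) unfolding T_def by blast
  then show ?thesis unfolding S_def by force
qed

lemma alg_gen_eq: "alg_gen S p \<Longrightarrow> (\<forall>s\<in>S. s a = s b) \<Longrightarrow> p a = p b"
  by (induction rule: alg_gen.induct) auto

lemma polyfun_const: "polyfun (\<lambda>_. c)" unfolding polyfun_def by (rule alg_gen.const)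
lemma polyfun_coord: "polyfun (\<lambda>x. x $ i)" unfolding polyfun_def by (rule alg_gen.gen) auto
lemma polyfun_add: "polyfun p \<Longrightarrow> polyfun q \<Longrightarrow> polyfun (\<lambda>x. p x + q x)"
  unfolding polyfun_def by (rule alg_gen.add)
lemma polyfun_mult: "polyfun p \<Longrightarrow> polyfun q \<Longrightarrow> polyfun (\<lambda>x. p x * q x)"
  unfolding polyfun_def by (rule alg_gen.mult)
lemma polyfun_diff: "polyfun p \<Longrightarrow> polyfun q \<Longrightarrow> polyfun (\<lambda>x. p x - q x)"
proof -
  assume "polyfun p" "polyfun q"
  then have "polyfun (\<lambda>x. p x + (\<lambda>_. -1) x * q x)"
    by (intro polyfun_add polyfun_mult polyfun_const)
  then show ?thesis by simp
qed
lemma polyfun_sum: "finite A \<Longrightarrow> (\<forall>a\<in>A. polyfun (f a)) \<Longrightarrow> polyfun (\<lambda>x. \<Sum>a\<in>A. f a x)"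
  by (induction A rule: finite_induct) (auto intro: polyfun_add polyfun_const)
lemma polyfun_prod: "finite A \<Longrightarrow> (\<forall>a\<in>A. polyfun (f a)) \<Longrightarrow> polyfun (\<lambda>x. \<Prod>a\<in>A. f a x)"
  by (induction A rule: finite_induct) (auto intro: polyfun_mult polyfun_const)

lemma polyfun_comp_mat:
  fixes g :: "complex^'n^'n"
  assumes "polyfun p" shows "polyfun (\<lambda>x. p (g *v x))"
  using assms unfolding polyfun_def
proof (induction rule: alg_gen.induct)
  case (const c) then show ?case by (rule alg_gen.const)
next
  case (gen s)
  then obtain i where s: "s = (\<lambda>x. x $ i)" by blast
  have "polyfun (\<lambda>x. \<Sum>j\<in>UNIV. g $ i $ j * x $ j)"
    by (rule polyfun_sum) (auto intro: polyfun_mult[OF polyfun_const polyfun_coord])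
  then show ?case unfolding s polyfun_def by (simp add: matrix_vector_mult_def)
next
  case (add p q) then show ?case using alg_gen.add[OF add.IH(1) add.IH(2)] by simp
next
  case (mult p q) then show ?case using alg_gen.mult[OF mult.IH(1) mult.IH(2)] by simp
qed

lemma interp1:
  fixes A :: "(complex^'n) set"
  assumes "finite A" "b \<notin> A"
  shows "\<exists>p. polyfun p \<and> (\<forall>a\<in>A. p a = 0) \<and> p b = 1"
proof -
  define i where "i = (\<lambda>a. SOME i. a $ i \<noteq> b $ i)"
  have i: "a $ i a \<noteq> b $ i a" if "a \<in> A" for a
  proof -
    have "a \<noteq> b" using that assms by blast
    then have "\<exists>i. a $ i \<noteq> b $ i" by (simp add: vec_eq_iff)
    then show ?thesis unfolding i_def by (rule someI_ex)
  qed
  define p where "p = (\<lambda>z. \<Prod>a\<in>A. (z $ i a - (\<lambda>_. a $ i a) z) * (\<lambda>_. inverse (b $ i a - a $ i a)) z)"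
  have "polyfun p" unfolding p_def
    by (intro polyfun_prod polyfun_mult polyfun_diff polyfun_const polyfun_coord assms ballI)
  moreover have "\<forall>a\<in>A. p a = 0" unfolding p_def using assms(1) by (auto intro: prod_zero)
  moreover have "p b = 1" unfolding p_def
  proof (intro prod.neutral ballI)
    fix a assume "a \<in> A"
    then have "b $ i a - a $ i a \<noteq> 0" using i by force
    then show "(b $ i a - a $ i a) * inverse (b $ i a - a $ i a) = 1" by simp
  qed
  ultimately show ?thesis by blast
qed

lemma interp2:
  fixes A :: "(complex^'n) set"
  assumes "finite A" "finite B" "A \<inter> B = {}"
  shows "\<exists>p. polyfun p \<and> (\<forall>a\<in>A. p a = 0) \<and> (\<forall>b\<in>B. p b = 1)"
proof -
  have "\<forall>b\<in>B. \<exists>p. polyfun p \<and> (\<forall>a\<in>A. p a = 0) \<and> p b = 1"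
    using interp1[OF assms(1)] assms(3) by blast
  then obtain e where e: "\<forall>b\<in>B. polyfun (e b) \<and> (\<forall>a\<in>A. e b a = 0) \<and> e b b = 1"
    by metis
  define p where "p = (\<lambda>z. (\<lambda>_. 1) z - (\<Prod>b\<in>B. (\<lambda>_. 1) z - e b z))"
  have "polyfun p" unfolding p_def
    using e by (intro polyfun_prod polyfun_diff polyfun_const assms ballI) auto
  moreover have "\<forall>a\<in>A. p a = 0" unfolding p_def using e by simp
  moreover have "\<forall>b\<in>B. p b = 1" unfolding p_def using e assms(2) by (auto intro: prod_zero)
  ultimately show ?thesis by blast
qed

lemma inv_props:
  fixes h :: "complex^'n^'n"
  assumes "invertible h"
  shows "matrix_inv h ** h = mat 1" "h ** matrix_inv h = mat 1"
proof -
  have "h ** matrix_inv h = mat 1 \<and> matrix_inv h ** h = mat 1"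
    using assms unfolding invertible_def matrix_inv_def by (rule someI_ex)
  then show "matrix_inv h ** h = mat 1" "h ** matrix_inv h = mat 1" by auto
qed

lemma orbit_sep:
  fixes G :: "(complex^'n^'n) set" and \<sigma> :: "complex^'n \<Rightarrow> complex^'m"
  assumes G: "finite_linear_group G" and sig: "minimal_homog_generators G \<sigma>"
    and eq: "\<sigma> a = \<sigma> b"
  shows "\<exists>g\<in>G. b = g *v a"
proof (rule ccontr)
  assume nb: "\<not> (\<exists>g\<in>G. b = g *v a)"
  have fin: "finite G" and one: "mat 1 \<in> G" and inv: "\<forall>g\<in>G. invertible g \<and> matrix_inv g \<in> G"
    and mul: "\<forall>g\<in>G. \<forall>h\<in>G. g ** h \<in> G"
    using G unfolding finite_linear_group_def by auto
  define A where "A = (\<lambda>g. g *v a) ` G"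
  define B where "B = (\<lambda>g. g *v b) ` G"
  have "A \<inter> B = {}"
  proof (rule ccontr)
    assume "A \<inter> B \<noteq> {}"
    then obtain g h where gh: "g \<in> G" "h \<in> G" "g *v a = h *v b" unfolding A_def B_def by blast
    have "b = matrix_inv h *v (h *v b)" using inv_props(1)[of h] inv gh by (simp add: matrix_vector_mul_assoc)
    also have "\<dots> = matrix_inv h *v (g *v a)" using gh by simp
    also have "\<dots> = (matrix_inv h ** g) *v a" by (simp add: matrix_vector_mul_assoc)
    finally have "b = (matrix_inv h ** g) *v a" .
    moreover have "matrix_inv h ** g \<in> G" using inv mul gh by blast
    ultimately show False using nb by blast
  qed
  then obtain p where p: "polyfun p" "\<forall>x\<in>A. p x = 0" "\<forall>x\<in>B. p x = 1"
    using interp2[of A B] fin unfolding A_def B_def by blast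
  define q where "q = (\<lambda>z. \<Sum>g\<in>G. p (g *v z))"
  have pq: "polyfun q" unfolding q_def
    using fin p(1) by (intro polyfun_sum ballI polyfun_comp_mat) auto
  have invq: "\<forall>h\<in>G. \<forall>z. q (h *v z) = q z"
  proof (intro ballI allI)
    fix h z assume h: "h \<in> G"
    have injh: "inj_on (\<lambda>g. g ** h) G"
    proof
      fix g g' assume "g \<in> G" "g' \<in> G" "g ** h = g' ** h"
      then have "(g ** h) ** matrix_inv h = (g' ** h) ** matrix_inv h" by simp
      then show "g = g'" using inv_props(2)[of h] inv h by (simp add: matrix_mul_assoc[symmetric] matrix_mul_rid)
    qed
    have img: "(\<lambda>g. g ** h) ` G = G"
      by (rule endo_inj_surj[OF fin _ injh]) (use mul h in auto)
    have "q (h *v z) = (\<Sum>g\<in>G. p ((g ** h) *v z))" unfolding q_def by (simp add: matrix_vector_mul_assoc)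
    also have "\<dots> = (\<Sum>g\<in>(\<lambda>g. g ** h) ` G. p (g *v z))"
      using sum.reindex[OF injh, of "\<lambda>g. p (g *v z)"] by simp
    also have "\<dots> = q z" unfolding q_def img ..
    finally show "q (h *v z) = q z" .
  qed
  have "invariant_poly G q" unfolding invariant_poly_def using pq invq by blast
  then have ag: "alg_gen (range (\<lambda>j x. \<sigma> x $ j)) q" using sig unfolding minimal_homog_generators_def by blast
  have "q a = q b" by (rule alg_gen_eq[OF ag]) (use eq in auto)
  moreover have "q a = 0" unfolding q_def using p(2) unfolding A_def by simp
  moreover have "q b = of_nat (card G)" unfolding q_def using p(3) unfolding B_def by simp
  moreover have "card G \<noteq> 0" using fin one by auto
  ultimately show False by simp
qed

lemma lholo_comb:
  assumes "lholo U (\<lambda>y. F2 y $ i)" "\<forall>j. lholo U (\<lambda>y. F1 y $ j)"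
  shows "lholo U (\<lambda>y. F2 y $ i - (\<Sum>j\<in>UNIV. c j * F1 y $ j))"
  unfolding lholo_def
proof (intro allI impI)
  fix s v t assume st: "s + t *s v \<in> U"
  have d2: "(\<lambda>t. F2 (s + t *s v) $ i) field_differentiable (at t)"
    using assms(1) st unfolding lholo_def by blast
  have d1: "(\<lambda>t. F1 (s + t *s v) $ j) field_differentiable (at t)" for j
    using assms(2) st unfolding lholo_def by blast
  show "(\<lambda>t. F2 (s + t *s v) $ i - (\<Sum>j\<in>UNIV. c j * F1 (s + t *s v) $ j)) field_differentiable (at t)"
    by (intro field_differentiable_diff field_differentiable_sum field_differentiable_mult
          field_differentiable_const d1 d2)
qed

lemma holo_cont: "holo_on U F \<Longrightarrow> continuous_on U F"
proof -
  assume "holo_on U F"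
  then have "\<forall>x\<in>U. isCont F x" unfolding holo_on_def using has_derivative_continuous by blast
  then show ?thesis by (rule continuous_at_imp_continuous_on)
qed

lemma holo_on_subset: "holo_on W F \<Longrightarrow> U \<subseteq> W \<Longrightarrow> holo_on U F"
  unfolding holo_on_def by blast

lemma finite_cover_open:
  fixes \<phi> :: "'i \<Rightarrow> 'a::topological_space \<Rightarrow> 'b::real_normed_vector"
  assumes "finite I"
  shows "open W \<Longrightarrow> W \<noteq> {} \<Longrightarrow> (\<forall>i\<in>I. continuous_on W (\<phi> i)) \<Longrightarrow> (\<forall>y\<in>W. \<exists>i\<in>I. \<phi> i y = 0)
     \<Longrightarrow> \<exists>i\<in>I. \<exists>W'. open W' \<and> W' \<noteq> {} \<and> W' \<subseteq> W \<and> (\<forall>y\<in>W'. \<phi> i y = 0)"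
  using assms
proof (induction I arbitrary: W rule: finite_induct)
  case empty then show ?case by blast
next
  case (insert i I)
  show ?case
  proof (cases "\<forall>y\<in>W. \<phi> i y = 0")
    case True then show ?thesis using insert.prems by blast
  next
    case False
    define W0 where "W0 = \<phi> i -` (- {0}) \<inter> W"
    have "open W0" unfolding W0_def
      using insert.prems(1,3) continuous_on_open_vimage[of W "\<phi> i"] by blast
    moreover have "W0 \<noteq> {}" using False unfolding W0_def by blast
    moreover have "\<forall>j\<in>I. continuous_on W0 (\<phi> j)"
      using insert.prems(3) by (auto intro: continuous_on_subset simp: W0_def)
    moreover have "\<forall>y\<in>W0. \<exists>j\<in>I. \<phi> j y = 0" using insert.prems(4) unfolding W0_def by auto
    ultimately obtain j W' where "j \<in> I" "open W'" "W' \<noteq> {}" "W' \<subseteq> W0" "\<forall>y\<in>W'. \<phi> j y = 0"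
      using insert.IH[of W0] by blast
    then show ?thesis unfolding W0_def by blast
  qed
qed

lemma part1:
  fixes G :: "(complex^'n^'n) set" and \<sigma> :: "complex^'n \<Rightarrow> complex^'m"
    and U :: "(complex^'p) set"
  assumes G: "finite_linear_group G" and sig: "minimal_homog_generators G \<sigma>"
    and U: "open U" "connected U" and h1: "holo_on U F1" and h2: "holo_on U F2"
    and eq: "\<forall>y\<in>U. \<sigma> (F1 y) = \<sigma> (F2 y)"
  shows "\<exists>g\<in>G. \<forall>y\<in>U. F2 y = g *v F1 y"
proof (cases "U = {}")
  case True
  then show ?thesis using G unfolding finite_linear_group_def by blast
next
  case False
  have fin: "finite G" using G unfolding finite_linear_group_def by blast
  define \<phi> where "\<phi> = (\<lambda>g y. F2 y - g *v F1 y)"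
  have c1: "continuous_on U F1" and c2: "continuous_on U F2" using h1 h2 holo_cont by blast+
  have cont: "\<forall>g\<in>G. continuous_on U (\<phi> g)"
  proof
    fix g assume "g \<in> G"
    show "continuous_on U (\<phi> g)" unfolding \<phi>_def matrix_vector_mult_def
      by (intro continuous_on_diff continuous_on_vec_lambda continuous_on_sum continuous_on_mult
          continuous_on_const continuous_on_component c1 c2)
  qed
  have cov: "\<forall>y\<in>U. \<exists>g\<in>G. \<phi> g y = 0"
  proof
    fix y assume "y \<in> U"
    then obtain g where "g \<in> G" "F2 y = g *v F1 y" using orbit_sep[OF G sig] eq by metis
    then show "\<exists>g\<in>G. \<phi> g y = 0" unfolding \<phi>_def by auto
  qed
  obtain g W' where g: "g \<in> G" "open W'" "W' \<noteq> {}" "W' \<subseteq> U" "\<forall>y\<in>W'. \<phi> g y = 0"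
    using finite_cover_open[OF fin U(1) False cont cov] by blast
  have "\<forall>y\<in>U. F2 y = g *v F1 y"
  proof
    fix y assume y: "y \<in> U"
    have "(\<lambda>y. F2 y $ i - (\<Sum>j\<in>UNIV. g $ i $ j * F1 y $ j)) y = 0" for i
    proof (rule lholo_identity[OF U(1,2) _ g(4,2,3) _ y])
      show "lholo U (\<lambda>y. F2 y $ i - (\<Sum>j\<in>UNIV. g $ i $ j * F1 y $ j))"
        using lholo_comb holo_lholo[OF h1 U(1)] holo_lholo[OF h2 U(1)] by blast
      show "\<forall>y\<in>W'. F2 y $ i - (\<Sum>j\<in>UNIV. g $ i $ j * F1 y $ j) = 0"
        using g(5) unfolding \<phi>_def by (auto simp: vec_eq_iff matrix_vector_mult_def)
    qed
    then show "F2 y = g *v F1 y" by (simp add: vec_eq_iff matrix_vector_mult_def)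
  qed
  then show ?thesis using g(1) by blast
qed

theorem theorem2p7:
  fixes G :: "(complex^'n^'n) set"
    and \<sigma> :: "complex^'n \<Rightarrow> complex^'m"
  assumes "finite_linear_group G"
    and "minimal_homog_generators G \<sigma>"
  shows "(\<forall>(U :: (complex^'p) set) (f :: complex^'p \<Rightarrow> complex^'m) F1 F2.
            open U \<and> connected U \<and> holo_on U f \<and> (\<forall>y\<in>U. f y \<in> range \<sigma>) \<and>
            holo_on U F1 \<and> holo_on U F2 \<and>
            (\<forall>y\<in>U. \<sigma> (F1 y) = f y \<and> \<sigma> (F2 y) = f y)
            \<longrightarrow> (\<exists>g\<in>G. \<forall>y\<in>U. F2 y = g *v F1 y))
       \<and> (\<forall>(x :: complex^'p) (f :: complex^'p \<Rightarrow> complex^'m) F1 F2.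
            (\<exists>W. open W \<and> x \<in> W \<and> holo_on W f) \<and>
            (\<exists>W. open W \<and> x \<in> W \<and> holo_on W F1) \<and>
            (\<exists>W. open W \<and> x \<in> W \<and> holo_on W F2) \<and>
            eventually (\<lambda>y. f y \<in> range \<sigma>) (nhds x) \<and>
            eventually (\<lambda>y. \<sigma> (F1 y) = f y \<and> \<sigma> (F2 y) = f y) (nhds x)
            \<longrightarrow> (\<exists>g\<in>G. eventually (\<lambda>y. F2 y = g *v F1 y) (nhds x)))"
proof (intro conjI allI impI)
  fix U :: "(complex^'p) set" and f :: "complex^'p \<Rightarrow> complex^'m" and F1 F2
  assume A: "open U \<and> connected U \<and> holo_on U f \<and> (\<forall>y\<in>U. f y \<in> range \<sigma>) \<and>
            holo_on U F1 \<and> holo_on U F2 \<and> (\<forall>y\<in>U. \<sigma> (F1 y) = f y \<and> \<sigma> (F2 y) = f y)"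
  show "\<exists>g\<in>G. \<forall>y\<in>U. F2 y = g *v F1 y"
    by (rule part1[OF assms]) (use A in auto)
next
  fix x :: "complex^'p" and f :: "complex^'p \<Rightarrow> complex^'m" and F1 F2
  assume A: "(\<exists>W. open W \<and> x \<in> W \<and> holo_on W f) \<and>
            (\<exists>W. open W \<and> x \<in> W \<and> holo_on W F1) \<and>
            (\<exists>W. open W \<and> x \<in> W \<and> holo_on W F2) \<and>
            eventually (\<lambda>y. f y \<in> range \<sigma>) (nhds x) \<and>
            eventually (\<lambda>y. \<sigma> (F1 y) = f y \<and> \<sigma> (F2 y) = f y) (nhds x)"
  then obtain W1 W2 S where W: "open W1" "x \<in> W1" "holo_on W1 F1" "open W2" "x \<in> W2" "holo_on W2 F2"
    "open S" "x \<in> S" "\<forall>y\<in>S. \<sigma> (F1 y) = f y \<and> \<sigma> (F2 y) = f y"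
    unfolding eventually_nhds by blast
  have "open (W1 \<inter> W2 \<inter> S)" "x \<in> W1 \<inter> W2 \<inter> S" using W by auto
  then obtain r where r: "r > 0" "ball x r \<subseteq> W1 \<inter> W2 \<inter> S" using open_contains_ball by blast
  have "\<exists>g\<in>G. \<forall>y\<in>ball x r. F2 y = g *v F1 y"
  proof (rule part1[OF assms])
    show "holo_on (ball x r) F1" using holo_on_subset W(3) r by blast
    show "holo_on (ball x r) F2" using holo_on_subset W(6) r by blast
    show "\<forall>y\<in>ball x r. \<sigma> (F1 y) = \<sigma> (F2 y)" using W(9) r by auto
  qed auto
  then obtain g where g: "g \<in> G" "\<forall>y\<in>ball x r. F2 y = g *v F1 y" by blast
  have "eventually (\<lambda>y. y \<in> ball x r) (nhds x)"
    using r(1) by (intro eventually_nhds_in_open) auto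
  then have "eventually (\<lambda>y. F2 y = g *v F1 y) (nhds x)"
    by (rule eventually_mono) (use g in auto)
  then show "\<exists>g\<in>G. eventually (\<lambda>y. F2 y = g *v F1 y) (nhds x)"
    using g(1) by blast
qed

end
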